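(* Let $c>0$. For $T>0$, $t\in[0,T]$ and a function $g$ on $\mathbb{R}^2$ define \[ \|\hat g\|_{t}:=\left\|\frac{(1+|\xi|)^3\hat g(\xi)}{e^{-c|\xi|t}+e^{-c|\xi|(T-t)}}\right\|_{L^\infty(\mathbb{R}^2_\xi)}. \] There exists $K>0$ such that for every $T>0$, every $t\in[0,T]$, and all functions $f,g$ with $\|\hat f\|_t,\|\hat g\|_t<+\infty$, \[ \|\widehat{fg}\|_t\leqslant K\|\hat f\|_t\|\hat g\|_t. \]
   Context: $\hat g$ is the Fourier transform on $\mathbb{R}^2$ with Fourier variable $\xi$, normalized so that $\widehat{fg}=\hat f*\hat g$ (convolution in $\xi$). *)

theory Defs
  imports "HOL-Analysis.Analysis" "HOL-Probability.Essential_Supremum"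
begin

text \<open>Weighted Fourier-side norm: the L-infinity (essential supremum w.r.t. Lebesgue
measure) norm of (1+|xi|)^3 F(xi) / (exp(-c|xi|t) + exp(-c|xi|(T-t))), where F plays
the role of the Fourier transform of a function on R^2.\<close>
definition wnorm :: "real \<Rightarrow> real \<Rightarrow> real \<Rightarrow> (real^2 \<Rightarrow> complex) \<Rightarrow> ereal" where
  "wnorm c T t F = esssup lborel (\<lambda>\<xi>. ereal ((1 + norm \<xi>) ^ 3 * cmod (F \<xi>)
      / (exp (- c * norm \<xi> * t) + exp (- c * norm \<xi> * (T - t)))))"

text \<open>Convolution in the Fourier variable; by the normalization of the Fourier transform,
the transform of a product f g is the convolution of the transforms.\<close>
definition fconv :: "(real^2 \<Rightarrow> complex) \<Rightarrow> (real^2 \<Rightarrow> complex) \<Rightarrow> real^2 \<Rightarrow> complex" where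
  "fconv F G = (\<lambda>\<xi>. LINT \<eta>|lborel. F (\<xi> - \<eta>) * G \<eta>)"

end

theory Submission
  imports Defs
begin


lemma int_q_finite:
  "(\<integral>\<^sup>+x. ennreal (1 / (1 + norm x)^3) \<partial>(lborel::(real^2) measure)) < \<infinity>"
proof -
  define V where "V = unit_ball_vol (real DIM(real^2))"
  have V0: "V \<ge> 0" unfolding V_def by simp
  define A where "A k = cball (0::real^2) (real k + 1) - ball 0 (real k)" for k::nat
  have Asets[measurable]: "A k \<in> sets lborel" for k unfolding A_def by auto
  have meas: "emeasure lborel (A k) = ennreal (V * (2*real k + 1))" for k
  proof -
    have "emeasure lborel (A k) = emeasure lborel (cball (0::real^2) (real k + 1)) - emeasure lborel (ball (0::real^2) (real k))"
      unfolding A_def using emeasure_lborel_ball_finite[of "0::real^2" "real k"] by (intro emeasure_Diff) auto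
    also have "\<dots> = ennreal (V * (real k + 1)^2) - ennreal (V * (real k)^2)"
      by (simp add: emeasure_cball emeasure_ball V_def)
    also have "\<dots> = ennreal (V * (2*real k + 1))"
      using V0 by (subst ennreal_minus) (auto simp: algebra_simps power2_eq_square)
    finally show ?thesis .
  qed
  have pw: "ennreal (1 / (1 + norm x)^3) \<le> (\<Sum>k. ennreal (1/(1+real k)^3) * indicator (A k) x)" for x :: "real^2"
  proof -
    define k where "k = nat \<lfloor>norm x\<rfloor>"
    have k1: "real k \<le> norm x" "norm x \<le> real k + 1" unfolding k_def
      by (simp_all add: of_nat_floor)
    hence xA: "x \<in> A k" unfolding A_def by auto
    have "ennreal (1 / (1 + norm x)^3) \<le> ennreal (1/(1+real k)^3) * indicator (A k) x"
      using xA k1 by (auto intro!: ennreal_leI divide_left_mono power_mono mult_pos_pos)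
    also have "\<dots> \<le> (\<Sum>k. ennreal (1/(1+real k)^3) * indicator (A k) x)" (is "?a \<le> suminf ?f")
    proof -
      have "?a = sum ?f {k}" by (simp only: sum.insert sum.empty finite.emptyI empty_iff add_0_right not_False_eq_True)
      also have "\<dots> \<le> suminf ?f" by (rule sum_le_suminf[OF summableI]) auto
      finally show ?thesis .
    qed
    finally show ?thesis .
  qed
  have "(\<integral>\<^sup>+x. ennreal (1 / (1 + norm x)^3) \<partial>(lborel::(real^2) measure))
      \<le> (\<integral>\<^sup>+x. (\<Sum>k. ennreal (1/(1+real k)^3) * indicator (A k) x) \<partial>lborel)"
    by (intro nn_integral_mono pw)
  also have "\<dots> = (\<Sum>k. \<integral>\<^sup>+x. ennreal (1/(1+real k)^3) * indicator (A k) x \<partial>lborel)"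
    by (intro nn_integral_suminf) auto
  also have "\<dots> = (\<Sum>k. ennreal (V * (2*real k + 1) / (1+real k)^3))"
    apply (intro arg_cong[where f=suminf] ext)
    apply (subst nn_integral_cmult_indicator)
    using Asets apply simp
    using V0 by (simp add: meas ennreal_mult'[symmetric] mult.commute)
  also have "\<dots> \<le> (\<Sum>k. ennreal (2 * V * inverse (real (Suc k) ^ 2)))"
  proof (intro suminf_le summableI ennreal_leI)
    fix k
    have kk: "(2*real k + 1) / (1+real k)^3 \<le> 2 * inverse (real (Suc k) ^ 2)"
    proof -
      have p: "(1+real k) > 0" by simp
      have "(2*real k + 1) / (1+real k)^3 = ((2*real k + 1) / (1+real k)) * inverse ((1+real k)^2)"
        by (simp add: field_simps power2_eq_square power3_eq_cube)
      also have "\<dots> \<le> 2 * inverse ((1+real k)^2)"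
        using p by (intro mult_right_mono) (auto simp: divide_le_eq)
      finally show ?thesis by (simp add: add.commute)
    qed
    show "V * (2*real k + 1) / (1+real k)^3 \<le> 2 * V * inverse (real (Suc k) ^ 2)"
      using mult_left_mono[OF kk V0] by (simp add: mult_ac)
  qed
  also have "\<dots> < \<infinity>"
  proof -
    have "summable (\<lambda>k. inverse (real k ^ 2))" by (rule inverse_power_summable) simp
    hence "summable (\<lambda>k. inverse (real (Suc k) ^ 2))" by (subst summable_Suc_iff)
    hence "summable (\<lambda>k. 2 * V * inverse (real (Suc k) ^ 2))" by (rule summable_mult)
    thus ?thesis using ennreal_suminf_neq_top V0 by (simp add: top.not_eq_extremum)
  qed
  finally show ?thesis .
qed



lemma exp_split:
  fixes a b L r u c :: real
  assumes "a \<ge> 0" "b \<ge> 0" "L \<le> a + b" "r \<ge> 0" "u \<ge> 0" "c \<ge> 0"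
  shows "exp (-c*a * r) * exp (-c*b*u) \<le> exp (-c*L * min r u)"
proof -
  have "L * min r u \<le> (a+b) * min r u" using assms by (intro mult_right_mono) auto
  also have "\<dots> \<le> a * r + b*u" using assms
    by (simp add: algebra_simps add_mono mult_left_mono)
  finally have "L * min r u \<le> a * r + b*u" .
  hence "c*(L * min r u) \<le> c*(a * r + b*u)" using assms by (intro mult_left_mono) auto
  thus ?thesis by (simp add: exp_add[symmetric] algebra_simps)
qed

lemma W_mult:
  fixes x y :: "'a::real_normed_vector" and c t T :: real
  assumes "c \<ge> 0" "0 \<le> t" "t \<le> T"
  shows "(exp (- c * norm x * t) + exp (- c * norm x * (T - t))) * (exp (- c * norm y * t) + exp (- c * norm y * (T - t)))
    \<le> 4 * (exp (- c * norm (x+y) * t) + exp (- c * norm (x+y) * (T - t)))"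
proof -
  have L: "norm (x+y) \<le> norm x + norm y" by (rule norm_triangle_ineq)
  have e: "exp (- c * norm x * r) * exp (- c * norm y * u) \<le> exp (- c * norm (x+y) * t) + exp (- c * norm (x+y) * (T - t))"
    if "r \<in> {t, T-t}" "u \<in> {t, T-t}" for r u
  proof -
    have "exp (- c * norm x * r) * exp (- c * norm y * u) \<le> exp (-c * norm (x+y) * min r u)"
      using that assms by (intro exp_split[OF norm_ge_zero norm_ge_zero L]) auto
    also have "\<dots> \<le> exp (- c * norm (x+y) * t) + exp (- c * norm (x+y) * (T - t))"
    proof -
      have "min r u \<in> {t, T-t}" using that by (auto simp: min_def)
      thus ?thesis by (smt (verit) exp_gt_zero insertE singletonD)
    qed
    finally show ?thesis .
  qed
  show ?thesis using e[of t t] e[of t "T-t"] e[of "T-t" t] e[of "T-t" "T-t"] by (simp add: algebra_simps)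
qed

lemma q_bound:
  fixes x y :: "'a::real_normed_vector"
  shows "(1 + norm (x+y))^3 \<le> 8 * ((1 + norm x)^3 + (1 + norm y)^3)"
proof -
  define m where "m = max (1 + norm x) (1 + norm y)"
  have "1 + norm (x+y) \<le> 2 * m" unfolding m_def using norm_triangle_ineq[of x y] by (auto simp: max_def)
  hence "(1 + norm (x+y))^3 \<le> (2*m)^3" by (intro power_mono) auto
  also have "\<dots> = 8 * m^3" by simp
  also have "m^3 \<le> (1 + norm x)^3 + (1 + norm y)^3" unfolding m_def
    by (cases "norm x \<le> norm y") (auto simp: max_def)
  finally show ?thesis by simp
qed

lemma AE_transl:
  fixes P :: "'a::euclidean_space \<Rightarrow> bool"
  shows "Measurable.pred borel P \<Longrightarrow> AE x in lborel. P x \<Longrightarrow> AE x in lborel. P (z - x)"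
  by (subst lborel_affine[where t=z and c="-1"]) (simp_all add: AE_density AE_distr_iff)

lemma nn_transl:
  fixes h :: "'a::euclidean_space \<Rightarrow> ennreal"
  assumes [measurable]: "h \<in> borel_measurable borel"
  shows "(\<integral>\<^sup>+x. h x \<partial>lborel) = (\<integral>\<^sup>+x. h (z - x) \<partial>lborel)"
  by (subst lborel_affine[where t=z and c="-1"]) (simp_all add: nn_integral_density nn_integral_distr)




lemma AE_lborel_nontriv: "(AE x in (lborel::(real^2) measure). P) \<Longrightarrow> P"
proof (rule ccontr)
  assume "AE x in (lborel::(real^2) measure). P" "\<not> P"
  hence "AE x in (lborel::(real^2) measure). False" by simp
  hence "ae_filter (lborel::(real^2) measure) = bot" using trivial_limit_def by blast
  hence "emeasure (lborel::(real^2) measure) (space lborel) = 0" by (simp add: ae_filter_eq_bot_iff)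
  thus False by simp
qed

lemma fin_q: "(\<integral>\<^sup>+x. ennreal (1 / (1 + norm x)^3) \<partial>(lborel::(real^2) measure)) < \<infinity>"
  by (rule int_q_finite)

theorem lemma7:
  fixes c :: real
  assumes "c > 0"
  shows "\<exists>K>0. \<forall>T>0. \<forall>t\<in>{0..T}. \<forall>F G :: real^2 \<Rightarrow> complex.
           F \<in> borel_measurable lborel \<longrightarrow> G \<in> borel_measurable lborel \<longrightarrow>
           wnorm c T t F < \<infinity> \<longrightarrow> wnorm c T t G < \<infinity> \<longrightarrow>
           wnorm c T t (fconv F G) \<le> ereal K * wnorm c T t F * wnorm c T t G"
proof -
  define I where "I = (\<integral>\<^sup>+x. ennreal (1 / (1 + norm x)^3) \<partial>(lborel::(real^2) measure))"
  obtain Ir where Ir: "I = ennreal Ir" "0 \<le> Ir"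
    using fin_q unfolding I_def[symmetric] by (cases I) auto
  define K where "K = 64 * Ir + 1"
  have K0: "K > 0" unfolding K_def using Ir by simp
  show ?thesis
  proof (intro exI[of _ K] conjI allI impI ballI K0)
    fix T t :: real and F G :: "real^2 \<Rightarrow> complex"
    assume T: "T > 0" and t: "t \<in> {0..T}"
      and Fm[measurable]: "F \<in> borel_measurable lborel" and Gm[measurable]: "G \<in> borel_measurable lborel"
      and Ffin: "wnorm c T t F < \<infinity>" and Gfin: "wnorm c T t G < \<infinity>"
    define W where "W \<xi> = exp (- c * norm \<xi> * t) + exp (- c * norm \<xi> * (T - t))" for \<xi> :: "real^2"
    define q where "q \<xi> = (1 + norm \<xi>)^3" for \<xi> :: "real^2"
    have Wpos: "W \<xi> > 0" for \<xi> unfolding W_def by (intro add_pos_pos) auto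
    have qpos: "q \<xi> > 0" for \<xi> unfolding q_def by (simp add: add_pos_nonneg)
    have [measurable]: "W \<in> borel_measurable borel" unfolding W_def by measurable
    have [measurable]: "q \<in> borel_measurable borel" unfolding q_def by measurable
    have wn: "wnorm c T t H = esssup lborel (\<lambda>\<xi>. ereal (q \<xi> * cmod (H \<xi>) / W \<xi>))" for H
      by (simp add: wnorm_def W_def q_def)
    have nonneg: "wnorm c T t H \<ge> 0" for H
    proof -
      have "AE \<xi> in lborel. ereal (q \<xi> * cmod (H \<xi>) / W \<xi>) \<le> wnorm c T t H"
        unfolding wn by (rule esssup_AE)
      hence "AE \<xi>::real^2 in lborel. 0 \<le> wnorm c T t H"
      proof (rule eventually_mono)
        fix x assume h: "ereal (q x * cmod (H x) / W x) \<le> wnorm c T t H"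
        have "0 \<le> q x * cmod (H x) / W x" using qpos[of x] Wpos[of x] by simp
        hence "(0::ereal) \<le> ereal (q x * cmod (H x) / W x)" by simp
        thus "0 \<le> wnorm c T t H" using h by (rule order.trans)
      qed
      thus ?thesis by (rule AE_lborel_nontriv)
    qed
    have getbound: "\<exists>a\<ge>0. wnorm c T t H = ereal a \<and> (AE x in lborel. cmod (H x) \<le> a * W x / q x)"
      if fin: "wnorm c T t H < \<infinity>" for H
    proof -
      obtain a where a: "wnorm c T t H = ereal a" using fin nonneg[of H] by (cases "wnorm c T t H") auto
      have "a \<ge> 0" using a nonneg[of H] by simp
      have "AE \<xi> in lborel. ereal (q \<xi> * cmod (H \<xi>) / W \<xi>) \<le> wnorm c T t H"
        unfolding wn by (rule esssup_AE)
      hence "AE x in lborel. cmod (H x) \<le> a * W x / q x"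
        by (rule eventually_mono) (use qpos Wpos in \<open>auto simp: a field_simps\<close>)
      thus ?thesis using a \<open>a \<ge> 0\<close> by blast
    qed
    obtain a where a: "a \<ge> 0" "wnorm c T t F = ereal a" and AEF: "AE x in lborel. cmod (F x) \<le> a * W x / q x"
      using getbound[OF Ffin] by blast
    obtain b where b: "b \<ge> 0" "wnorm c T t G = ereal b" and AEG: "AE x in lborel. cmod (G x) \<le> b * W x / q x"
      using getbound[OF Gfin] by blast
    have pw: "cmod (fconv F G \<xi>) \<le> 64 * Ir * a * b * W \<xi> / q \<xi>" for \<xi>
    proof -
      define C where "C = 32 * a * b * W \<xi> / q \<xi>"
      have C0: "C \<ge> 0" unfolding C_def using a b Wpos[of \<xi>] qpos[of \<xi>] by simp
      have AEF': "AE \<eta> in lborel. cmod (F (\<xi> - \<eta>)) \<le> a * W (\<xi> - \<eta>) / q (\<xi> - \<eta>)"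
        by (rule AE_transl[OF _ AEF]) measurable
      have key: "AE \<eta> in lborel. ennreal (cmod (F (\<xi> - \<eta>) * G \<eta>)) \<le> ennreal (C * (1 / q (\<xi> - \<eta>))) + ennreal (C * (1 / q \<eta>))"
        using AEF' AEG
      proof eventually_elim
        case (elim \<eta>)
        define x where "x = \<xi> - \<eta>"
        have f: "cmod (F x) \<le> a * W x / q x" using elim x_def by simp
        have g: "cmod (G \<eta>) \<le> b * W \<eta> / q \<eta>" using elim by simp
        have xe: "x + \<eta> = \<xi>" unfolding x_def by simp
        have "cmod (F x * G \<eta>) \<le> (a * W x / q x) * (b * W \<eta> / q \<eta>)"
          unfolding norm_mult using a(1) Wpos[of x] qpos[of x] by (intro mult_mono f g) auto
        also have "\<dots> = (a * b) * (W x * W \<eta>) / (q x * q \<eta>)" by simp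
        also have "\<dots> \<le> (a * b) * (4 * W \<xi>) / (q x * q \<eta>)"
          using W_mult[of c t T x \<eta>] assms t a b qpos[of x] qpos[of \<eta>]
          by (intro divide_right_mono mult_left_mono) (auto simp: W_def xe)
        also have "\<dots> = (a * b * W \<xi>) * (4 / (q x * q \<eta>))" by simp
        also have "\<dots> \<le> (a * b * W \<xi>) * (32 * (q x + q \<eta>) / (q \<xi> * q x * q \<eta>))"
        proof (intro mult_left_mono)
          have "q \<xi> \<le> 8 * (q x + q \<eta>)" using q_bound[of x \<eta>] unfolding q_def xe by simp
          thus "4 / (q x * q \<eta>) \<le> 32 * (q x + q \<eta>) / (q \<xi> * q x * q \<eta>)"
            using qpos[of x] qpos[of \<eta>] qpos[of \<xi>] by (simp add: divide_simps)
        qed (use a b Wpos[of \<xi>] in auto)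
        also have "\<dots> = C * (1 / q x) + C * (1 / q \<eta>)"
          unfolding C_def using qpos[of x] qpos[of \<eta>] qpos[of \<xi>] by (simp add: field_simps)
        finally have "cmod (F x * G \<eta>) \<le> C * (1 / q x) + C * (1 / q \<eta>)" .
        hence "ennreal (cmod (F x * G \<eta>)) \<le> ennreal (C * (1 / q x) + C * (1 / q \<eta>))"
          by (rule ennreal_leI)
        also have "\<dots> = ennreal (C * (1 / q x)) + ennreal (C * (1 / q \<eta>))"
          using C0 qpos[of x] qpos[of \<eta>] by (intro ennreal_plus) auto
        finally show ?case unfolding x_def .
      qed
      have Ieq: "(\<integral>\<^sup>+\<eta>. ennreal (C * (1 / q \<eta>)) \<partial>lborel) = ennreal (C * Ir)"
      proof -
        have "(\<integral>\<^sup>+\<eta>. ennreal (C * (1 / q \<eta>)) \<partial>lborel) = (\<integral>\<^sup>+\<eta>. ennreal C * ennreal (1 / (1 + norm \<eta>)^3) \<partial>(lborel::(real^2) measure))"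
          using C0 by (intro nn_integral_cong) (simp add: q_def ennreal_mult[symmetric] add_pos_nonneg)
        also have "\<dots> = ennreal C * I" unfolding I_def by (rule nn_integral_cmult) measurable
        also have "\<dots> = ennreal (C * Ir)" using Ir C0 by (simp add: ennreal_mult)
        finally show ?thesis .
      qed
      define R where "R = 64 * Ir * a * b * W \<xi> / q \<xi>"
      have R0: "R \<ge> 0" unfolding R_def using Ir a b Wpos[of \<xi>] qpos[of \<xi>] by simp
      have "(\<integral>\<^sup>+\<eta>. ennreal (cmod (F (\<xi> - \<eta>) * G \<eta>)) \<partial>lborel)
          \<le> (\<integral>\<^sup>+\<eta>. ennreal (C * (1 / q (\<xi> - \<eta>))) + ennreal (C * (1 / q \<eta>)) \<partial>lborel)"
        by (rule nn_integral_mono_AE[OF key])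
      also have "\<dots> = (\<integral>\<^sup>+\<eta>. ennreal (C * (1 / q (\<xi> - \<eta>))) \<partial>lborel) + (\<integral>\<^sup>+\<eta>. ennreal (C * (1 / q \<eta>)) \<partial>lborel)"
        by (rule nn_integral_add) measurable
      also have "(\<integral>\<^sup>+\<eta>. ennreal (C * (1 / q (\<xi> - \<eta>))) \<partial>lborel) = (\<integral>\<^sup>+\<eta>. ennreal (C * (1 / q \<eta>)) \<partial>lborel)"
        by (rule nn_transl[symmetric, where h="\<lambda>\<eta>. ennreal (C * (1 / q \<eta>))"]) measurable
      also have "(\<integral>\<^sup>+\<eta>. ennreal (C * (1 / q \<eta>)) \<partial>lborel) + (\<integral>\<^sup>+\<eta>. ennreal (C * (1 / q \<eta>)) \<partial>lborel) = ennreal R"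
        unfolding Ieq using Ir C0 qpos[of \<xi>] Wpos[of \<xi>] a b
        by (subst ennreal_plus[symmetric]) (auto simp: field_simps R_def C_def)
      finally have bnd: "(\<integral>\<^sup>+\<eta>. ennreal (cmod (F (\<xi> - \<eta>) * G \<eta>)) \<partial>lborel) \<le> ennreal R" .
      show ?thesis
      proof (cases "integrable lborel (\<lambda>\<eta>. F (\<xi> - \<eta>) * G \<eta>)")
        case True
        have "ennreal (cmod (fconv F G \<xi>)) \<le> (\<integral>\<^sup>+\<eta>. ennreal (cmod (F (\<xi> - \<eta>) * G \<eta>)) \<partial>lborel)"
          unfolding fconv_def using integral_norm_bound_ennreal[OF True] by simp
        also note bnd
        finally show ?thesis using R0 unfolding R_def by (simp add: ennreal_le_iff)
      next
        case False
        thus ?thesis using R0 unfolding R_def fconv_def by (simp add: not_integrable_integral_eq)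
      qed
    qed
    have Fb[measurable]: "F \<in> borel_measurable borel" using Fm by simp
    have Gb[measurable]: "G \<in> borel_measurable borel" using Gm by simp
    have "(\<lambda>(\<xi>, \<eta>). F (\<xi> - \<eta>) * G \<eta>) \<in> borel_measurable (lborel \<Otimes>\<^sub>M (lborel::(real^2) measure))"
      by measurable
    hence "(\<lambda>\<xi>. LINT \<eta>|lborel. F (\<xi> - \<eta>) * G \<eta>) \<in> borel_measurable lborel"
      by (rule lborel.borel_measurable_lebesgue_integral[of _ "lborel::(real^2) measure"])
    hence convm[measurable]: "fconv F G \<in> borel_measurable borel"
      unfolding fconv_def by simp
    have "wnorm c T t (fconv F G) \<le> ereal (K * a * b)"
      unfolding wn
    proof (rule esssup_I)
      show "(\<lambda>\<xi>. ereal (q \<xi> * cmod (fconv F G \<xi>) / W \<xi>)) \<in> borel_measurable lborel" by measurable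
      show "AE \<xi> in lborel. ereal (q \<xi> * cmod (fconv F G \<xi>) / W \<xi>) \<le> ereal (K * a * b)"
      proof (intro AE_I2)
        fix \<xi>
        have "q \<xi> * cmod (fconv F G \<xi>) / W \<xi> \<le> 64 * Ir * a * b"
          using pw[of \<xi>] qpos[of \<xi>] Wpos[of \<xi>] by (simp add: field_simps)
        also have "\<dots> \<le> K * a * b" unfolding K_def using a b
          by (intro mult_right_mono) auto
        finally show "ereal (q \<xi> * cmod (fconv F G \<xi>) / W \<xi>) \<le> ereal (K * a * b)" by simp
      qed
    qed
    thus "wnorm c T t (fconv F G) \<le> ereal K * wnorm c T t F * wnorm c T t G"
      using a b by simp
  qed
qed

end
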